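(* Let $k$ be an algebraically closed field of characteristic zero, $\mathfrak g$ a nilpotent Lie algebra over $k$ of dimension $n\ge 2$, and $(A,\cdot)$ an LR-structure on $\mathfrak g$ such that the commuting family $\{L(x):x\in A\}$ has a single weight $\alpha$ on $A$, with $\alpha\neq 0$ (i.e., each $L(x)$ has the single eigenvalue $\alpha(L(x))$, and $\alpha$ is not identically zero). Let $e_1,\dots,e_n$ be a basis of $A$ in which all $L(x)$ are upper triangular, normalized so that $\alpha(L(e_n))=1$ and $\alpha(L(e_k))=0$ for $1\le k\le n-1$. Write $L(e_k)=(a^k_{i,j})_{1\le i,j\le n}$. Then $a^k_{n-1,n}=0$ for all $k=1,\dots,n-2$, and the subspace $\mathrm{span}(e_1,\dots,e_{n-2})$ is a two-sided ideal of $A$.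
   Context: An LR-algebra is a vector space $A$ with a bilinear product $\cdot$ satisfying $x\cdot(y\cdot z)=y\cdot(x\cdot z)$ and $(x\cdot y)\cdot z=(x\cdot z)\cdot y$ for all $x,y,z\in A$. An LR-structure on a Lie algebra $\mathfrak g$ is an LR-algebra product on the underlying vector space of $\mathfrak g$ with $x\cdot y-y\cdot x=[x,y]$. $L(x)y=x\cdot y$. (In this setting a basis with the stated normalization always exists.) *)

theory Defs
  imports "HOL-Computational_Algebra.Polynomial"
begin

text \<open>Coordinates: the algebra A is k^n, realised as functions nat => k supported on {1..n};
  the basis vector e_i is the i-th coordinate vector. The product is given by structure
  constants: e_i * e_j = sum_m c i j m e_m.\<close>

definition vecs :: "nat \<Rightarrow> (nat \<Rightarrow> 'a::field) set" where
  "vecs n = {x. \<forall>i. i \<notin> {1..n} \<longrightarrow> x i = 0}"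

definition basis_vec :: "nat \<Rightarrow> nat \<Rightarrow> 'a::field" where
  "basis_vec i = (\<lambda>m. if m = i then 1 else 0)"

definition prod_sc :: "nat \<Rightarrow> (nat \<Rightarrow> nat \<Rightarrow> nat \<Rightarrow> 'a::field)
    \<Rightarrow> (nat \<Rightarrow> 'a) \<Rightarrow> (nat \<Rightarrow> 'a) \<Rightarrow> (nat \<Rightarrow> 'a)" where
  "prod_sc n c x y = (\<lambda>m. if m \<in> {1..n} then
      (\<Sum>i=1..n. \<Sum>j=1..n. x i * y j * c i j m) else 0)"

definition bracket_sc :: "nat \<Rightarrow> (nat \<Rightarrow> nat \<Rightarrow> nat \<Rightarrow> 'a::field)
    \<Rightarrow> (nat \<Rightarrow> 'a) \<Rightarrow> (nat \<Rightarrow> 'a) \<Rightarrow> (nat \<Rightarrow> 'a)" where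
  "bracket_sc n c x y = (\<lambda>m. prod_sc n c x y m - prod_sc n c y x m)"

definition is_LR_algebra :: "nat \<Rightarrow> (nat \<Rightarrow> nat \<Rightarrow> nat \<Rightarrow> 'a::field) \<Rightarrow> bool" where
  "is_LR_algebra n c \<longleftrightarrow>
     (\<forall>x\<in>vecs n. \<forall>y\<in>vecs n. \<forall>z\<in>vecs n.
        prod_sc n c x (prod_sc n c y z) = prod_sc n c y (prod_sc n c x z) \<and>
        prod_sc n c (prod_sc n c x y) z = prod_sc n c (prod_sc n c x z) y)"

text \<open>Nilpotency of the Lie algebra (A, [x,y] = x*y - y*x): some term of the lower central
  series vanishes, i.e. all N-fold iterated brackets [x1,[x2,...,[xN,y]...]] are zero.\<close>
definition lie_nilpotent :: "nat \<Rightarrow> (nat \<Rightarrow> nat \<Rightarrow> nat \<Rightarrow> 'a::field) \<Rightarrow> bool" where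
  "lie_nilpotent n c \<longleftrightarrow>
     (\<exists>N. \<forall>xs y. length xs = N \<longrightarrow> set xs \<subseteq> vecs n \<longrightarrow> y \<in> vecs n \<longrightarrow>
        foldr (bracket_sc n c) xs y = (\<lambda>_. 0))"

definition alg_closed :: "'a::field itself \<Rightarrow> bool" where
  "alg_closed _ \<longleftrightarrow> (\<forall>p :: 'a poly. degree p > 0 \<longrightarrow> (\<exists>x. poly p x = 0))"

definition two_sided_ideal :: "nat \<Rightarrow> (nat \<Rightarrow> nat \<Rightarrow> nat \<Rightarrow> 'a::field)
    \<Rightarrow> (nat \<Rightarrow> 'a) set \<Rightarrow> bool" where
  "two_sided_ideal n c I \<longleftrightarrow> I \<subseteq> vecs n \<and> (\<lambda>_. 0) \<in> I \<and>
     (\<forall>x\<in>I. \<forall>y\<in>I. (\<lambda>m. x m + y m) \<in> I) \<and>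
     (\<forall>a. \<forall>x\<in>I. (\<lambda>m. a * x m) \<in> I) \<and>
     (\<forall>x\<in>vecs n. \<forall>y\<in>I. prod_sc n c x y \<in> I \<and> prod_sc n c y x \<in> I)"

definition span_first :: "nat \<Rightarrow> nat \<Rightarrow> (nat \<Rightarrow> 'a::field) set" where
  "span_first n r = {x \<in> vecs n. \<forall>i. r < i \<longrightarrow> x i = 0}"

end

theory Submission
  imports Defs
begin

lemma prod_basis_right:
  assumes "j \<in> {1..n}"
  shows "prod_sc n c x (basis_vec j) m = (if m \<in> {1..n} then (\<Sum>i=1..n. x i * c i j m) else 0)"
proof -
  have "\<And>i. (\<Sum>j'=1..n. x i * basis_vec j j' * c i j' m) = x i * c i j m"
  proof -
    fix i
    have "(\<Sum>j'=1..n. x i * basis_vec j j' * c i j' m) = (\<Sum>j'\<in>{1..n}. if j' = j then x i * c i j m else 0)"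
      by (rule sum.cong) (auto simp: basis_vec_def)
    also have "\<dots> = x i * c i j m" using assms by (simp add: sum.delta)
    finally show "(\<Sum>j'=1..n. x i * basis_vec j j' * c i j' m) = x i * c i j m" .
  qed
  then show ?thesis by (simp add: prod_sc_def)
qed

lemma prod_basis_basis:
  assumes "i \<in> {1..n}" "j \<in> {1..n}"
  shows "prod_sc n c (basis_vec i) (basis_vec j) m = (if m \<in> {1..n} then c i j m else 0)"
proof -
  have "(\<Sum>i'=1..n. basis_vec i i' * c i' j m) = (\<Sum>i'\<in>{1..n}. if i' = i then c i j m else 0)"
    by (rule sum.cong) (auto simp: basis_vec_def)
  also have "\<dots> = c i j m" using assms by (simp add: sum.delta)
  finally show ?thesis using assms by (simp add: prod_basis_right)
qed

lemma basis_vecs: "i \<in> {1..n} \<Longrightarrow> basis_vec i \<in> vecs n"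
  by (auto simp: vecs_def basis_vec_def)

theorem lemma2p3:
  fixes n :: nat
    and c :: "nat \<Rightarrow> nat \<Rightarrow> nat \<Rightarrow> 'a::field_char_0"
    and \<alpha> :: "nat \<Rightarrow> 'a"
  assumes closed: "alg_closed TYPE('a)"
    and n2: "n \<ge> 2"
    and LR: "is_LR_algebra n c"
    and nil: "lie_nilpotent n c"
    and upper: "\<And>k i j. k \<in> {1..n} \<Longrightarrow> i \<in> {1..n} \<Longrightarrow> j \<in> {1..n} \<Longrightarrow> j < i \<Longrightarrow> c k j i = 0"
    and weight: "\<And>k i. k \<in> {1..n} \<Longrightarrow> i \<in> {1..n} \<Longrightarrow> c k i i = \<alpha> k"
    and norm_n: "\<alpha> n = 1"
    and norm_k: "\<And>k. 1 \<le> k \<Longrightarrow> k \<le> n - 1 \<Longrightarrow> \<alpha> k = 0"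
  shows "(\<forall>k. 1 \<le> k \<and> k \<le> n - 2 \<longrightarrow> c k n (n - 1) = 0)
         \<and> two_sided_ideal n c (span_first n (n - 2))"
proof -
  have nn: "n \<in> {1..n}" using n2 by auto
  have key: "(\<Sum>i=1..k. c n k i * c i n (n-1)) = 0" if k1: "1 \<le> k" and k2: "k \<le> n - 2" for k
  proof -
    have kn: "k \<in> {1..n}" using k1 k2 by auto
    have eq: "prod_sc n c (prod_sc n c (basis_vec n) (basis_vec k)) (basis_vec n)
        = prod_sc n c (prod_sc n c (basis_vec n) (basis_vec n)) (basis_vec k)"
      using LR basis_vecs[OF nn] basis_vecs[OF kn] unfolding is_LR_algebra_def by blast
    have m: "n - 1 \<in> {1..n}" using n2 by auto
    have P1: "prod_sc n c (basis_vec n) (basis_vec k) = (\<lambda>m. if m \<in> {1..n} then c n k m else 0)"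
      by (rule ext, rule prod_basis_basis[OF nn kn])
    have P2: "prod_sc n c (basis_vec n) (basis_vec n) = (\<lambda>m. if m \<in> {1..n} then c n n m else 0)"
      by (rule ext, rule prod_basis_basis[OF nn nn])
    have L: "prod_sc n c (prod_sc n c (basis_vec n) (basis_vec k)) (basis_vec n) (n-1)
          = (\<Sum>i=1..n. c n k i * c i n (n-1))"
      unfolding P1 using m nn kn by (simp add: prod_basis_right)
    have R: "prod_sc n c (prod_sc n c (basis_vec n) (basis_vec n)) (basis_vec k) (n-1) = 0"
    proof -
      have "prod_sc n c (prod_sc n c (basis_vec n) (basis_vec n)) (basis_vec k) (n-1)
          = (\<Sum>i=1..n. c n n i * c i k (n-1))"
        unfolding P2 using m nn kn by (simp add: prod_basis_right)
      also have "\<dots> = 0"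
        by (rule sum.neutral) (use upper kn m k2 n2 in auto)
      finally show ?thesis .
    qed
    have "(\<Sum>i=1..n. c n k i * c i n (n-1)) = 0" using eq L R by metis
    moreover have "(\<Sum>i=1..n. c n k i * c i n (n-1)) = (\<Sum>i=1..k. c n k i * c i n (n-1))"
      by (rule sum.mono_neutral_right) (use upper kn nn in auto)
    ultimately show ?thesis by simp
  qed
  have S: "\<forall>k. 1 \<le> k \<and> k \<le> n - 2 \<longrightarrow> c k n (n - 1) = 0"
  proof
    fix k
    show "1 \<le> k \<and> k \<le> n - 2 \<longrightarrow> c k n (n - 1) = 0"
    proof (induct k rule: less_induct)
      case (less k)
      show ?case
      proof
        assume h: "1 \<le> k \<and> k \<le> n - 2"
        have kn: "k \<in> {1..n}" using h by auto
        have "(\<Sum>i=1..k. c n k i * c i n (n-1)) = c n k k * c k n (n-1) + (\<Sum>i\<in>{1..k}-{k}. c n k i * c i n (n-1))"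
          using h by (subst sum.remove[of _ k]) auto
        also have "(\<Sum>i\<in>{1..k}-{k}. c n k i * c i n (n-1)) = 0"
          by (rule sum.neutral) (use less h in auto)
        also have "c n k k = 1" using weight[OF nn kn] norm_n by simp
        finally show "c k n (n - 1) = 0" using key h by simp
      qed
    qed
  qed
  have ideal: "two_sided_ideal n c (span_first n (n - 2))"
    unfolding two_sided_ideal_def
  proof (intro conjI ballI allI)
    show "span_first n (n - 2) \<subseteq> vecs n" by (auto simp: span_first_def)
    show "(\<lambda>_. 0) \<in> span_first n (n - 2)" by (auto simp: span_first_def vecs_def)
    show "(\<lambda>m. x m + y m) \<in> span_first n (n - 2)"
      if "x \<in> span_first n (n - 2)" "y \<in> span_first n (n - 2)" for x y
      using that by (auto simp: span_first_def vecs_def)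
    show "(\<lambda>m. a * x m) \<in> span_first n (n - 2)"
      if "x \<in> span_first n (n - 2)" for a x
      using that by (auto simp: span_first_def vecs_def)
    fix x y :: "nat \<Rightarrow> 'a"
    assume x: "x \<in> vecs n" and y: "y \<in> span_first n (n - 2)"
    show "prod_sc n c x y \<in> span_first n (n - 2)"
      unfolding span_first_def
    proof (intro CollectI conjI allI impI)
      show "prod_sc n c x y \<in> vecs n" by (auto simp: vecs_def prod_sc_def)
      fix m assume m: "n - 2 < m"
      show "prod_sc n c x y m = 0"
      proof (cases "m \<in> {1..n}")
        case True
        have "\<forall>i\<in>{1..n}. \<forall>j\<in>{1..n}. x i * y j * c i j m = 0"
        proof (intro ballI)
          fix i j assume i: "i \<in> {1..n}" and j: "j \<in> {1..n}"
          show "x i * y j * c i j m = 0"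
          proof (cases "n - 2 < j")
            case True then show ?thesis using y by (auto simp: span_first_def)
          next
            case False then show ?thesis using upper[OF i True j] m by auto
          qed
        qed
        then show ?thesis by (simp add: prod_sc_def sum.neutral)
      qed (auto simp: prod_sc_def)
    qed
    show "prod_sc n c y x \<in> span_first n (n - 2)"
      unfolding span_first_def
    proof (intro CollectI conjI allI impI)
      show "prod_sc n c y x \<in> vecs n" by (auto simp: vecs_def prod_sc_def)
      fix m assume m: "n - 2 < m"
      show "prod_sc n c y x m = 0"
      proof (cases "m \<in> {1..n}")
        case True
        have "\<forall>i\<in>{1..n}. \<forall>j\<in>{1..n}. y i * x j * c i j m = 0"
        proof (intro ballI)
          fix i j assume i: "i \<in> {1..n}" and j: "j \<in> {1..n}"
          show "y i * x j * c i j m = 0"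
          proof (cases "n - 2 < i")
            case True then show ?thesis using y by (auto simp: span_first_def)
          next
            case False
            have "c i j m = 0"
            proof (cases "j < m")
              case True then show ?thesis using upper[OF i _ j] \<open>m \<in> {1..n}\<close> by auto
            next
              case jm: False
              show ?thesis
              proof (cases "j = m")
                case True then show ?thesis using weight[OF i j] norm_k[of i] False i n2 by auto
              next
                case False
                then have "j = n" "m = n - 1" using jm j m \<open>m \<in> {1..n}\<close> by auto
                then show ?thesis using S \<open>\<not> n - 2 < i\<close> i by auto
              qed
            qed
            then show ?thesis by simp
          qed
        qed
        then show ?thesis by (simp add: prod_sc_def sum.neutral)
      qed (auto simp: prod_sc_def)
    qed
  qed
  show ?thesis using S ideal by blast
qed

end
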